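(* Under Assumptions A1–A3 (with constant $p$), the valuation operator $V$ is irreducible on $L_p(\pi)$: the only closed ideals $J\subset L_p(\pi)$ with $V(J)\subset J$ are $\{0\}$ and $L_p(\pi)$.
   Context: Standing setting: $\{X_t\}_{t\ge0}$ is a stationary Markov process on a separable completely metrizable space $\mathsf X$ with transition kernel $\Pi$, $n$-step kernel $\Pi^n$, and stationary law $\pi$; $\{\eta_t\}$ iid with law $\nu$ on $\mathsf W$, independent of $\{X_t\}$; $\phi,g\ge0$ Borel on $\mathsf X\times\mathsf X\times\mathsf W$ with $\Phi_{t+1}=\phi(X_t,X_{t+1},\eta_{t+1})$, $G_{t+1}=g(X_t,X_{t+1},\eta_{t+1})$. $L_p(\pi)$ is the Banach lattice of $p$-integrable functions modulo $\pi$-null sets with $\pi$-a.e. order; $\mathcal H_p$ its nonnegative elements. An ideal is a vector subspace $J$ such that $f\in J$ whenever $|f|\le|h|$ for some $h\in J$. Valuation operator $Vh(x)=\int h(y)[\int\phi(x,y,\eta)\nu(d\eta)]\Pi(x,dy)$; $\hat g(x)=\int\int\phi g\,d\nu\,\Pi(x,dy)$. A1: $\phi>0$ everywhere and $G_t>0$ with positive probability. A2: for all Borel $B$ with $\pi(B)>0$ and all $x$, $\Pi^n(x,B)>0$ for some $n$. A3: for some $p\ge1$, $\hat g\in\mathcal H_p$ and $V$ maps $L_p(\pi)$ into itself with some power $V^i$ compact. *)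

theory Defs
  imports "HOL-Probability.Probability"
begin

definition Lp :: "'a measure \<Rightarrow> real \<Rightarrow> ('a \<Rightarrow> real) set" where
  "Lp M p = {f. f \<in> borel_measurable M \<and> integrable M (\<lambda>x. \<bar>f x\<bar> powr p)}"

definition Lp_norm :: "'a measure \<Rightarrow> real \<Rightarrow> ('a \<Rightarrow> real) \<Rightarrow> real" where
  "Lp_norm M p f = (\<integral>x. \<bar>f x\<bar> powr p \<partial>M) powr (1 / p)"

text \<open>The zero element of L_p(M), as the set of its representatives.\<close>
definition Lp_zero :: "'a measure \<Rightarrow> real \<Rightarrow> ('a \<Rightarrow> real) set" where
  "Lp_zero M p = {f \<in> Lp M p. AE x in M. f x = 0}"

text \<open>An ideal of the Banach lattice L_p(M), given by the set of all representatives of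
  its elements (hence automatically saturated w.r.t. a.e. equality by solidity).\<close>
definition Lp_ideal :: "'a measure \<Rightarrow> real \<Rightarrow> ('a \<Rightarrow> real) set \<Rightarrow> bool" where
  "Lp_ideal M p J \<longleftrightarrow>
     J \<subseteq> Lp M p \<and> (\<lambda>x. 0) \<in> J \<and>
     (\<forall>f\<in>J. \<forall>h\<in>J. (\<lambda>x. f x + h x) \<in> J) \<and>
     (\<forall>c. \<forall>f\<in>J. (\<lambda>x. c * f x) \<in> J) \<and>
     (\<forall>f\<in>Lp M p. \<forall>h\<in>J. (AE x in M. \<bar>f x\<bar> \<le> \<bar>h x\<bar>) \<longrightarrow> f \<in> J)"

definition Lp_closed :: "'a measure \<Rightarrow> real \<Rightarrow> ('a \<Rightarrow> real) set \<Rightarrow> bool" where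
  "Lp_closed M p J \<longleftrightarrow>
     (\<forall>f h. (\<forall>n. f n \<in> J) \<longrightarrow> h \<in> Lp M p \<longrightarrow>
        (\<lambda>n. Lp_norm M p (\<lambda>x. f n x - h x)) \<longlonglongrightarrow> 0 \<longrightarrow> h \<in> J)"

definition Lp_compact_op :: "'a measure \<Rightarrow> real \<Rightarrow> (('a \<Rightarrow> real) \<Rightarrow> ('a \<Rightarrow> real)) \<Rightarrow> bool" where
  "Lp_compact_op M p T \<longleftrightarrow>
     (\<forall>(f :: nat \<Rightarrow> 'a \<Rightarrow> real) C. (\<forall>n. f n \<in> Lp M p \<and> Lp_norm M p (f n) \<le> C) \<longrightarrow>
        (\<exists>r h. strict_mono r \<and> h \<in> Lp M p \<and>
           (\<lambda>n. Lp_norm M p (\<lambda>x. T (f (r n)) x - h x)) \<longlonglongrightarrow> 0))"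

primrec kpow :: "('a::topological_space \<Rightarrow> 'a measure) \<Rightarrow> nat \<Rightarrow> 'a \<Rightarrow> 'a measure" where
  "kpow K 0 = (\<lambda>x. return borel x)"
| "kpow K (Suc n) = (\<lambda>x. bind (kpow K n x) K)"

definition valop :: "('a \<Rightarrow> 'a measure) \<Rightarrow> 'w measure \<Rightarrow> ('a \<Rightarrow> 'a \<Rightarrow> 'w \<Rightarrow> real)
     \<Rightarrow> ('a \<Rightarrow> real) \<Rightarrow> ('a \<Rightarrow> real)" where
  "valop K nu phi h = (\<lambda>x. \<integral>y. h y * (\<integral>e. phi x y e \<partial>nu) \<partial>K x)"

definition ghat :: "('a \<Rightarrow> 'a measure) \<Rightarrow> 'w measure \<Rightarrow> ('a \<Rightarrow> 'a \<Rightarrow> 'w \<Rightarrow> real)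
     \<Rightarrow> ('a \<Rightarrow> 'a \<Rightarrow> 'w \<Rightarrow> real) \<Rightarrow> 'a \<Rightarrow> ennreal" where
  "ghat K nu phi g x = (\<integral>\<^sup>+y. \<integral>\<^sup>+e. ennreal (phi x y e * g x y e) \<partial>nu \<partial>K x)"

end

theory Submission
  imports Defs
begin

lemma kpow_meas:
  assumes K: "K \<in> borel \<rightarrow>\<^sub>M subprob_algebra borel"
  shows "kpow K n \<in> borel \<rightarrow>\<^sub>M subprob_algebra borel"
proof (induction n)
  case 0 then show ?case by (simp add: return_measurable)
next
  case (Suc n) then show ?case using K by (simp add: measurable_bind2)
qed

lemma kpow_sets: "K \<in> borel \<rightarrow>\<^sub>M subprob_algebra borel \<Longrightarrow> sets (kpow K n x) = sets borel"
  using sets_kernel[OF kpow_meas] by auto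

lemma kpow_one: "K \<in> borel \<rightarrow>\<^sub>M subprob_algebra borel \<Longrightarrow> kpow K (Suc 0) x = K x"
  by (simp add: bind_return)

lemma bind_stat:
  assumes K: "K \<in> borel \<rightarrow>\<^sub>M subprob_algebra borel"
    and pi_prob: "prob_space Q" and pi_sets: "sets Q = sets borel"
    and st: "\<And>B. B \<in> sets borel \<Longrightarrow> (\<integral>\<^sup>+x. emeasure (K x) B \<partial>Q) = emeasure Q B"
  shows "bind Q K = Q"
proof -
  have Kp: "K \<in> Q \<rightarrow>\<^sub>M subprob_algebra borel" using K measurable_cong_sets[OF pi_sets refl] by blast
  have ne: "space Q \<noteq> {}" using pi_prob prob_space.not_empty by blast
  show ?thesis
  proof (rule measure_eqI)
    show "sets (bind Q K) = sets Q" using sets_bind[OF sets_kernel[OF Kp] ne] pi_sets by simp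
    fix A assume "A \<in> sets (bind Q K)"
    then have A: "A \<in> sets borel" using sets_bind[OF sets_kernel[OF Kp] ne] by simp
    show "emeasure (bind Q K) A = emeasure Q A"
      using emeasure_bind[OF ne Kp A] st[OF A] by simp
  qed
qed

lemma kpow_stat:
  assumes K: "K \<in> borel \<rightarrow>\<^sub>M subprob_algebra borel"
    and pi_prob: "prob_space Q" and pi_sets: "sets Q = sets borel"
    and st: "bind Q K = Q"
  shows "bind Q (kpow K n) = Q"
proof (induction n)
  case 0
  have "bind Q (return borel) = Q" using bind_return''[of Q borel] pi_sets by simp
  then show ?case by simp
next
  case (Suc n)
  have kp: "kpow K n \<in> Q \<rightarrow>\<^sub>M subprob_algebra borel"
    using kpow_meas[OF K] measurable_cong_sets[OF pi_sets refl] by blast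
  have "bind Q (kpow K (Suc n)) = bind Q (\<lambda>x. bind (kpow K n x) K)" by simp
  also have "\<dots> = bind (bind Q (kpow K n)) K" using bind_assoc[OF kp K] by simp
  also have "\<dots> = Q" using Suc st by simp
  finally show ?case .
qed

lemma kpow_null:
  assumes K: "K \<in> borel \<rightarrow>\<^sub>M subprob_algebra borel"
    and pi_prob: "prob_space Q" and pi_sets: "sets Q = sets borel"
    and st: "bind Q K = Q" and N: "N \<in> sets borel" and N0: "emeasure Q N = 0"
  shows "AE x in Q. emeasure (kpow K n x) N = 0"
proof -
  have kp: "kpow K n \<in> Q \<rightarrow>\<^sub>M subprob_algebra borel"
    using kpow_meas[OF K] measurable_cong_sets[OF pi_sets refl] by blast
  have ne: "space Q \<noteq> {}" using pi_prob prob_space.not_empty by blast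
  have "(\<integral>\<^sup>+x. emeasure (kpow K n x) N \<partial>Q) = 0"
    using emeasure_bind[OF ne kp N] kpow_stat[OF K pi_prob pi_sets st, of n] N0 by simp
  moreover have "(\<lambda>x. emeasure (kpow K n x) N) \<in> borel_measurable Q"
    using measurable_emeasure_kernel[OF kp N] .
  ultimately show ?thesis by (simp add: nn_integral_0_iff_AE)
qed


lemma kpow_closed:
  assumes K: "K \<in> borel \<rightarrow>\<^sub>M subprob_algebra borel"
    and S: "S \<in> sets borel" and N0: "N0 \<in> sets borel"
    and x: "x \<notin> S" "x \<notin> N0" and out: "\<And>y. y \<notin> S \<Longrightarrow> y \<notin> N0 \<Longrightarrow> emeasure (K y) S = 0"
    and nul: "\<And>n. emeasure (kpow K n x) N0 = 0"
  shows "emeasure (kpow K (Suc n) x) S = 0"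
proof (induction n)
  case 0 then show ?case using kpow_one[OF K] out x by simp
next
  case (Suc n)
  let ?M = "kpow K (Suc n) x"
  have sM: "sets ?M = sets borel" using kpow_sets[OF K] .
  have ne: "space ?M \<noteq> {}" using sets_eq_imp_space_eq[OF sM] by simp
  have Km: "K \<in> ?M \<rightarrow>\<^sub>M subprob_algebra borel" using K measurable_cong_sets[OF sM refl] by blast
  have "emeasure (kpow K (Suc (Suc n)) x) S = (\<integral>\<^sup>+y. emeasure (K y) S \<partial>?M)"
    using emeasure_bind[OF ne Km S] by simp
  also have "\<dots> \<le> (\<integral>\<^sup>+y. indicator (S \<union> N0) y \<partial>?M)"
  proof (rule nn_integral_mono)
    fix y
    show "emeasure (K y) S \<le> indicator (S \<union> N0) y"
    proof (cases "y \<in> S \<union> N0")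
      case True
      have "y \<in> space borel" by simp
      then have "subprob_space (K y)" using subprob_space_kernel[OF K] by blast
      then have "emeasure (K y) S \<le> 1" by (rule subprob_space.subprob_emeasure_le_1)
      then show ?thesis using True by simp
    next
      case False then show ?thesis using out by simp
    qed
  qed
  also have "\<dots> = emeasure ?M (S \<union> N0)"
    using S N0 sM by (simp add: nn_integral_indicator)
  also have "\<dots> \<le> emeasure ?M S + emeasure ?M N0"
    using S N0 sM by (intro emeasure_subadditive) auto
  also have "\<dots> = 0" using Suc nul[of "Suc n"] by simp
  finally show ?case by simp
qed


lemma phi_sec_meas:
  assumes phi_meas: "(\<lambda>(x, y, e). phi x y e) \<in> borel_measurable (borel \<Otimes>\<^sub>M borel \<Otimes>\<^sub>M nu)"
  shows "(\<lambda>(y, e). phi x y e) \<in> borel_measurable (borel \<Otimes>\<^sub>M nu)"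
proof -
  have "(\<lambda>(y, e). (x, y, e)) \<in> (borel \<Otimes>\<^sub>M nu) \<rightarrow>\<^sub>M (borel \<Otimes>\<^sub>M borel \<Otimes>\<^sub>M nu)"
    by measurable
  from measurable_compose[OF this phi_meas] show ?thesis
    by (simp add: case_prod_beta')
qed

lemma V_zero:
  fixes phi :: "'a::polish_space \<Rightarrow> 'a \<Rightarrow> 'w \<Rightarrow> real"
  assumes K: "K \<in> borel \<rightarrow>\<^sub>M subprob_algebra borel"
    and nu_prob: "prob_space nu"
    and phi_meas: "(\<lambda>(x, y, e). phi x y e) \<in> borel_measurable (borel \<Otimes>\<^sub>M borel \<Otimes>\<^sub>M nu)"
    and phi_pos: "\<And>x y e. phi x y e > 0"
    and hm: "h \<in> borel_measurable borel"
    and hnn: "\<And>y. h y \<ge> 0"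
    and fin1: "(\<integral>\<^sup>+y. ennreal \<bar>1\<bar> * (\<integral>\<^sup>+e. ennreal (phi x y e) \<partial>nu) \<partial>K x) < \<infinity>"
    and finh: "(\<integral>\<^sup>+y. ennreal \<bar>h y\<bar> * (\<integral>\<^sup>+e. ennreal (phi x y e) \<partial>nu) \<partial>K x) < \<infinity>"
    and V0: "valop K nu phi h x = 0"
  shows "AE y in K x. h y = 0"
proof -
  interpret nu: prob_space nu by (rule nu_prob)
  define W where "W y = (\<integral>\<^sup>+e. ennreal (phi x y e) \<partial>nu)" for y
  define w where "w y = (\<integral>e. phi x y e \<partial>nu)" for y
  have sK: "sets (K x) = sets borel" using sets_kernel[OF K] by simp
  have pm[measurable]: "(\<lambda>(y, e). phi x y e) \<in> borel_measurable (borel \<Otimes>\<^sub>M nu)"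
    by (rule phi_sec_meas[OF phi_meas])
  have pm1[measurable]: "(\<lambda>e. phi x y e) \<in> borel_measurable nu" for y
    using measurable_Pair2[OF pm, of y] by simp
  have Wm: "W \<in> borel_measurable borel" unfolding W_def by measurable
  have wm: "w \<in> borel_measurable borel" unfolding w_def by measurable
  have WmK: "W \<in> borel_measurable (K x)" using Wm measurable_cong_sets[OF sK refl] by blast
  have wmK: "w \<in> borel_measurable (K x)" using wm measurable_cong_sets[OF sK refl] by blast
  have hmK: "h \<in> borel_measurable (K x)" using hm measurable_cong_sets[OF sK refl] by blast
  have w_eq: "w y = enn2real (W y)" for y
    unfolding w_def W_def using phi_pos[of x y] less_imp_le
    by (intro integral_eq_nn_integral) auto
  have w_le: "ennreal (w y) \<le> W y" for y
    by (simp add: w_eq ennreal_enn2real_if)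
  have w_nn: "w y \<ge> 0" for y by (simp add: w_eq)
  have w_pos: "w y > 0" if "W y < \<infinity>" for y
  proof -
    have "W y \<noteq> 0"
    proof
      assume "W y = 0"
      then have "AE e in nu. ennreal (phi x y e) = 0" unfolding W_def
        by (subst (asm) nn_integral_0_iff_AE) auto
      then have "AE e in nu. False"
        by (rule eventually_mono) (metis phi_pos ennreal_eq_0_iff not_le)
      then show False using nu.AE_False by simp
    qed
    then show ?thesis using that w_eq by (simp add: enn2real_positive_iff less_top[symmetric] zero_less_iff_neq_zero)
  qed
  have AEW: "AE y in K x. W y < \<infinity>"
  proof -
    have "integral\<^sup>N (K x) W \<noteq> \<infinity>" using fin1 unfolding W_def by simp
    from nn_integral_PInf_AE[OF WmK this] show ?thesis by (simp add: less_top)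
  qed
  have int: "integrable (K x) (\<lambda>y. h y * w y)"
  proof (subst integrable_iff_bounded, intro conjI)
    show "(\<lambda>y. h y * w y) \<in> borel_measurable (K x)" using hmK wmK by measurable
    have "(\<integral>\<^sup>+y. ennreal (norm (h y * w y)) \<partial>K x) \<le> (\<integral>\<^sup>+y. ennreal \<bar>h y\<bar> * W y \<partial>K x)"
    proof (rule nn_integral_mono)
      fix y
      have "ennreal (norm (h y * w y)) = ennreal \<bar>h y\<bar> * ennreal (w y)"
        using w_nn[of y] by (simp add: abs_mult ennreal_mult)
      also have "\<dots> \<le> ennreal \<bar>h y\<bar> * W y" by (intro mult_left_mono w_le) auto
      finally show "ennreal (norm (h y * w y)) \<le> ennreal \<bar>h y\<bar> * W y" .
    qed
    also have "\<dots> < \<infinity>" using finh unfolding W_def .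
    finally show "(\<integral>\<^sup>+y. ennreal (norm (h y * w y)) \<partial>K x) < \<infinity>" .
  qed
  have "integral\<^sup>L (K x) (\<lambda>y. h y * w y) = 0" using V0 unfolding valop_def w_def by simp
  then have "AE y in K x. h y * w y = 0"
    using integral_nonneg_eq_0_iff_AE[OF int] hnn w_nn by simp
  with AEW show ?thesis
  proof eventually_elim
    case (elim y) then show ?case using w_pos[of y] by simp
  qed
qed

theorem mainTheorem9:
  fixes K :: "'a::polish_space \<Rightarrow> 'a measure"
    and pi :: "'a measure" and nu :: "'w measure"
    and phi g :: "'a \<Rightarrow> 'a \<Rightarrow> 'w \<Rightarrow> real"
    and p :: real
  assumes kernel: "K \<in> borel \<rightarrow>\<^sub>M prob_algebra borel"
    and pi_prob: "prob_space pi" and pi_sets: "sets pi = sets borel"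
    and pi_stationary: "\<And>B. B \<in> sets borel \<Longrightarrow> (\<integral>\<^sup>+x. emeasure (K x) B \<partial>pi) = emeasure pi B"
    and nu_prob: "prob_space nu"
    and phi_meas: "(\<lambda>(x, y, e). phi x y e) \<in> borel_measurable (borel \<Otimes>\<^sub>M borel \<Otimes>\<^sub>M nu)"
    and g_meas: "(\<lambda>(x, y, e). g x y e) \<in> borel_measurable (borel \<Otimes>\<^sub>M borel \<Otimes>\<^sub>M nu)"
    and g_nonneg: "\<And>x y e. g x y e \<ge> 0"
    \<comment> \<open>A1\<close>
    and A1_phi_pos: "\<And>x y e. phi x y e > 0"
    and A1_G_pos: "(\<integral>\<^sup>+x. \<integral>\<^sup>+y. \<integral>\<^sup>+e. indicator {e. g x y e > 0} e \<partial>nu \<partial>K x \<partial>pi) > 0"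
    \<comment> \<open>A2\<close>
    and A2: "\<And>B x. B \<in> sets borel \<Longrightarrow> emeasure pi B > 0 \<Longrightarrow>
               \<exists>n\<ge>1. emeasure (kpow K n x) B > 0"
    \<comment> \<open>A3\<close>
    and p_ge: "p \<ge> 1"
    and A3_ghat: "AE x in pi. ghat K nu phi g x < \<infinity>"
    and A3_ghat_Lp: "(\<lambda>x. enn2real (ghat K nu phi g x)) \<in> Lp pi p"
    and A3_V_defined: "\<And>h. h \<in> Lp pi p \<Longrightarrow>
          AE x in pi. (\<integral>\<^sup>+y. ennreal \<bar>h y\<bar> * (\<integral>\<^sup>+e. ennreal (phi x y e) \<partial>nu) \<partial>K x) < \<infinity>"
    and A3_V_maps: "\<And>h. h \<in> Lp pi p \<Longrightarrow> valop K nu phi h \<in> Lp pi p"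
    and A3_compact: "\<exists>i\<ge>1. Lp_compact_op pi p (valop K nu phi ^^ i)"
  shows "\<forall>J. Lp_ideal pi p J \<and> Lp_closed pi p J \<and> (\<forall>h\<in>J. valop K nu phi h \<in> J)
            \<longrightarrow> J = Lp_zero pi p \<or> J = Lp pi p"
proof (intro allI impI)
  fix J assume H: "Lp_ideal pi p J \<and> Lp_closed pi p J \<and> (\<forall>h\<in>J. valop K nu phi h \<in> J)"
  then have cl: "Lp_closed pi p J" and inv: "\<And>h. h\<in>J \<Longrightarrow> valop K nu phi h \<in> J" by auto
  from H have JL: "J \<subseteq> Lp pi p" and J0: "(\<lambda>x. 0) \<in> J"
    and Jadd: "\<And>f h. f\<in>J \<Longrightarrow> h\<in>J \<Longrightarrow> (\<lambda>x. f x + h x) \<in> J"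
    and Jsc: "\<And>c f. f\<in>J \<Longrightarrow> (\<lambda>x. c * f x) \<in> J"
    and Jdom: "\<And>f h. f \<in> Lp pi p \<Longrightarrow> h\<in>J \<Longrightarrow> (AE x in pi. \<bar>f x\<bar> \<le> \<bar>h x\<bar>) \<Longrightarrow> f \<in> J"
    unfolding Lp_ideal_def by blast+
  interpret P: prob_space pi by (rule pi_prob)
  have Ks: "K \<in> borel \<rightarrow>\<^sub>M subprob_algebra borel" using kernel by (rule measurable_prob_algebraD)
  have st: "bind pi K = pi" by (rule bind_stat[OF Ks pi_prob pi_sets pi_stationary])
  have mcong: "borel_measurable pi = borel_measurable borel" using measurable_cong_sets[OF pi_sets refl] .
  have spi: "space pi = UNIV" using sets_eq_imp_space_eq[OF pi_sets] by simp
  show "J = Lp_zero pi p \<or> J = Lp pi p"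
  proof (cases "\<forall>f\<in>J. AE x in pi. f x = 0")
    case True
    have "J = Lp_zero pi p"
    proof
      show "J \<subseteq> Lp_zero pi p" using True JL unfolding Lp_zero_def by auto
      show "Lp_zero pi p \<subseteq> J"
      proof
        fix f assume "f \<in> Lp_zero pi p"
        then have fL: "f \<in> Lp pi p" and fz: "AE x in pi. f x = 0" unfolding Lp_zero_def by auto
        from fz have "AE x in pi. \<bar>f x\<bar> \<le> \<bar>(\<lambda>x. 0::real) x\<bar>" by (rule eventually_mono) simp
        then show "f \<in> J" by (rule Jdom[OF fL J0])
      qed
    qed
    then show ?thesis ..
  next
    case False
    then obtain f0 where f0J: "f0 \<in> J" and f0nz: "\<not> (AE x in pi. f0 x = 0)" by auto
    have f0L: "f0 \<in> Lp pi p" using f0J JL by auto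
    define h0 where "h0 x = \<bar>f0 x\<bar>" for x
    have h0L: "h0 \<in> Lp pi p" using f0L unfolding Lp_def h0_def by auto
    have h0J: "h0 \<in> J" by (rule Jdom[OF h0L f0J]) (simp add: h0_def)
    define hs where "hs n = (valop K nu phi ^^ n) h0" for n
    have hs0: "hs 0 = h0" and hsS: "hs (Suc n) = valop K nu phi (hs n)" for n by (simp_all add: hs_def)
    have hsJL: "hs n \<in> J \<and> hs n \<in> Lp pi p" for n
      by (induction n) (auto simp: hs0 hsS h0J h0L inv A3_V_maps)
    have V_nn: "valop K nu phi h x \<ge> 0" if "\<And>y. h y \<ge> 0" for h x
      unfolding valop_def using that A1_phi_pos
      by (intro Bochner_Integration.integral_nonneg mult_nonneg_nonneg) (auto intro: less_imp_le)
    have hs_nn: "hs n x \<ge> 0" for n x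
      by (induction n arbitrary: x) (auto simp: hs0 hsS h0_def V_nn)
    have hs_m[measurable]: "hs n \<in> borel_measurable borel" for n using hsJL[of n] mcong unfolding Lp_def by auto
    define S where "S = {x. \<exists>n. hs n x > 0}"
    have S_eq: "S = (\<Union>n. {x. hs n x > 0})" unfolding S_def by auto
    have Sb[measurable]: "S \<in> sets borel" unfolding S_eq by measurable
    have posS: "emeasure pi S > 0"
    proof -
      have sub: "{x. f0 x \<noteq> 0} \<subseteq> S" unfolding S_def by (auto intro!: exI[of _ 0] simp: hs0 h0_def)
      have f0m[measurable]: "f0 \<in> borel_measurable borel" using f0L mcong unfolding Lp_def by auto
      have f0b: "{x. f0 x \<noteq> 0} \<in> sets borel" by measurable
      have "emeasure pi {x. f0 x \<noteq> 0} \<noteq> 0"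
        using f0nz AE_iff_measurable[of "{x. f0 x \<noteq> 0}" pi "\<lambda>x. f0 x = 0"] f0b pi_sets spi by auto
      then have "emeasure pi {x. f0 x \<noteq> 0} > 0" by (simp add: zero_less_iff_neq_zero)
      also have "\<dots> \<le> emeasure pi S" using sub Sb pi_sets by (intro emeasure_mono) auto
      finally show ?thesis .
    qed
    have AES: "AE x in pi. x \<in> S"
    proof (rule ccontr)
      assume nAE: "\<not> (AE x in pi. x \<in> S)"
      have one_L: "(\<lambda>_. 1::real) \<in> Lp pi p" unfolding Lp_def by auto
      have AE1: "AE x in pi. (\<integral>\<^sup>+y. ennreal \<bar>(\<lambda>_. 1::real) y\<bar> * (\<integral>\<^sup>+e. ennreal (phi x y e) \<partial>nu) \<partial>K x) < \<infinity>"
        using A3_V_defined[OF one_L] .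
      have AEh: "AE x in pi. \<forall>n. (\<integral>\<^sup>+y. ennreal \<bar>hs n y\<bar> * (\<integral>\<^sup>+e. ennreal (phi x y e) \<partial>nu) \<partial>K x) < \<infinity>"
        unfolding AE_all_countable using A3_V_defined hsJL by blast
      have step1: "AE x in pi. x \<notin> S \<longrightarrow> emeasure (K x) S = 0"
        using AE1 AEh
      proof eventually_elim
        case (elim x)
        show ?case
        proof
          assume xS: "x \<notin> S"
          have "AE y in K x. hs n y = 0" for n
          proof (rule V_zero[OF Ks nu_prob phi_meas A1_phi_pos hs_m hs_nn])
            show "(\<integral>\<^sup>+y. ennreal \<bar>1\<bar> * (\<integral>\<^sup>+e. ennreal (phi x y e) \<partial>nu) \<partial>K x) < \<infinity>" using elim by simp
            show "(\<integral>\<^sup>+y. ennreal \<bar>hs n y\<bar> * (\<integral>\<^sup>+e. ennreal (phi x y e) \<partial>nu) \<partial>K x) < \<infinity>" using elim by blast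
            have "hs (Suc n) x = 0" using xS hs_nn[of "Suc n" x] unfolding S_def by (auto simp: not_less intro: antisym)
            then show "valop K nu phi (hs n) x = 0" by (simp add: hsS)
          qed
          then have "AE y in K x. \<forall>n. hs n y = 0" unfolding AE_all_countable ..
          then have AEy: "AE y in K x. y \<notin> S" by (rule eventually_mono) (auto simp: S_def)
          have sK: "sets (K x) = sets borel" using sets_kernel[OF Ks] by simp
          have spK: "space (K x) = UNIV" using sets_eq_imp_space_eq[OF sK] by simp
          show "emeasure (K x) S = 0"
            using AEy AE_iff_measurable[of S "K x" "\<lambda>y. y \<notin> S"] Sb sK spK by auto
        qed
      qed
      define N0 where "N0 = {x. x \<notin> S \<and> emeasure (K x) S \<noteq> 0}"
      have [measurable]: "(\<lambda>x. emeasure (K x) S) \<in> borel_measurable borel"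
        using measurable_emeasure_kernel[OF Ks Sb] .
      have N0b: "N0 \<in> sets borel" unfolding N0_def by measurable
      have N0null: "emeasure pi N0 = 0"
        using step1 AE_iff_measurable[of N0 pi "\<lambda>x. x\<notin>S \<longrightarrow> emeasure (K x) S = 0"] N0b pi_sets spi
        unfolding N0_def by auto
      have AEk: "AE x in pi. \<forall>n. emeasure (kpow K n x) N0 = 0"
        unfolding AE_all_countable using kpow_null[OF Ks pi_prob pi_sets st N0b N0null] by blast
      have AEN0: "AE x in pi. x \<notin> N0"
        using AE_iff_measurable[of N0 pi "\<lambda>x. x \<notin> N0"] N0b N0null pi_sets spi by auto
      have AEfin: "AE x in pi. x \<notin> S \<longrightarrow> (\<forall>n. emeasure (kpow K (Suc n) x) S = 0)"
        using AEk AEN0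
      proof eventually_elim
        case (elim x)
        show ?case
        proof (intro impI allI)
          fix n assume xS: "x \<notin> S"
          show "emeasure (kpow K (Suc n) x) S = 0"
            by (rule kpow_closed[OF Ks Sb N0b xS]) (use elim in \<open>auto simp: N0_def\<close>)
        qed
      qed
      have "\<exists>x. x \<notin> S \<and> (\<forall>n. emeasure (kpow K (Suc n) x) S = 0)"
      proof (rule ccontr)
        assume nx: "\<not> ?thesis"
        from AEfin have "AE x in pi. x \<in> S" by (rule eventually_mono) (use nx in blast)
        then show False using nAE by simp
      qed
      then obtain x where "x \<notin> S" and z: "\<forall>n. emeasure (kpow K (Suc n) x) S = 0" by blast
      from A2[OF Sb posS] obtain n where "n \<ge> 1" "emeasure (kpow K n x) S > 0" by blast
      then show False using z by (cases n) auto
    qed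
    have "Lp pi p \<subseteq> J"
    proof
      fix f assume fL: "f \<in> Lp pi p"
      have fm[measurable]: "f \<in> borel_measurable pi" and fint: "integrable pi (\<lambda>x. \<bar>f x\<bar> powr p)"
        using fL unfolding Lp_def by auto
      define u where "u k x = (\<Sum>n\<le>k. hs n x)" for k x
      have uJ: "u k \<in> J" for k
      proof (induction k)
        case 0
        have "u 0 = hs 0" by (simp add: u_def fun_eq_iff)
        then show ?case using hsJL[of 0] by simp
      next
        case (Suc k)
        have "u (Suc k) = (\<lambda>x. u k x + hs (Suc k) x)" by (simp add: u_def fun_eq_iff)
        then show ?case using Jadd[OF Suc conjunct1[OF hsJL[of "Suc k"]]] by simp
      qed
      have hs_mp[measurable]: "hs n \<in> borel_measurable pi" for n using hsJL unfolding Lp_def by auto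
      have um[measurable]: "u k \<in> borel_measurable pi" for k unfolding u_def by measurable
      define fk where "fk k x = (if \<bar>f x\<bar> \<le> real k * u k x then f x else 0)" for k x
      have fkm[measurable]: "fk k \<in> borel_measurable pi" for k unfolding fk_def by measurable
      have fk_le: "\<bar>fk k x\<bar> powr p \<le> \<bar>f x\<bar> powr p" for k x unfolding fk_def by auto
      have fkL: "fk k \<in> Lp pi p" for k
        unfolding Lp_def
      proof (intro CollectI conjI fkm)
        show "integrable pi (\<lambda>x. \<bar>fk k x\<bar> powr p)"
          by (rule Bochner_Integration.integrable_bound[OF fint]) (auto simp: fk_le)
      qed
      have fkJ: "fk k \<in> J" for k
      proof (rule Jdom[OF fkL Jsc[OF uJ]])
        show "AE x in pi. \<bar>fk k x\<bar> \<le> \<bar>real k * u k x\<bar>" by (auto simp: fk_def)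
      qed
      have lim: "(\<lambda>k. Lp_norm pi p (\<lambda>x. fk k x - f x)) \<longlonglongrightarrow> 0"
      proof -
        have D: "(\<lambda>k. \<integral>x. \<bar>fk k x - f x\<bar> powr p \<partial>pi) \<longlonglongrightarrow> (\<integral>x. 0 \<partial>pi)"
        proof (rule integral_dominated_convergence[where w="\<lambda>x. \<bar>f x\<bar> powr p"])
          show "(\<lambda>x. 0::real) \<in> borel_measurable pi" by simp
          show "(\<lambda>x. \<bar>fk k x - f x\<bar> powr p) \<in> borel_measurable pi" for k by measurable
          show "integrable pi (\<lambda>x. \<bar>f x\<bar> powr p)" by (rule fint)
          show "AE x in pi. norm (\<bar>fk k x - f x\<bar> powr p) \<le> \<bar>f x\<bar> powr p" for k by (auto simp: fk_def)
          show "AE x in pi. (\<lambda>k. \<bar>fk k x - f x\<bar> powr p) \<longlonglongrightarrow> 0" using AES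
          proof eventually_elim
            case (elim x)
            then obtain n where hn: "hs n x > 0" unfolding S_def by auto
            obtain M::nat where M: "\<bar>f x\<bar> / hs n x \<le> real M" using real_arch_simple by blast
            have "eventually (\<lambda>k. \<bar>fk k x - f x\<bar> powr p = 0) sequentially"
              unfolding eventually_sequentially
            proof (intro exI allI impI)
              fix k assume k: "max n M \<le> k"
              have hu: "hs n x \<le> u k x" unfolding u_def using k hs_nn by (intro member_le_sum) auto
              have "\<bar>f x\<bar> \<le> real M * hs n x" using M hn by (simp add: divide_le_eq)
              also have "\<dots> \<le> real k * u k x" using k hu hn by (intro mult_mono) auto
              finally show "\<bar>fk k x - f x\<bar> powr p = 0" by (simp add: fk_def)
            qed
            then show ?case by (rule tendsto_eventually)
          qed
        qed
        then have D0: "(\<lambda>k. \<integral>x. \<bar>fk k x - f x\<bar> powr p \<partial>pi) \<longlonglongrightarrow> 0" by simp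
        have "(\<lambda>k. (\<integral>x. \<bar>fk k x - f x\<bar> powr p \<partial>pi) powr (1/p)) \<longlonglongrightarrow> 0"
          by (rule tendsto_zero_powrI[OF D0 tendsto_const]) (use p_ge in \<open>auto intro!: always_eventually Bochner_Integration.integral_nonneg\<close>)
        then show ?thesis unfolding Lp_norm_def .
      qed
      show "f \<in> J" using cl fkJ fL lim unfolding Lp_closed_def by blast
    qed
    then have "J = Lp pi p" using JL by auto
    then show ?thesis ..
  qed
qed

end
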